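(* There are infinitely many positive integers $n$ such that $$H_{4n}(K_{2,3})\ge\left(\frac{1+\sqrt5}{2}\right)^{n-o(n)}.$$
   Context: For a graph $G$, $H_m(G)$ denotes the maximum number of Hamilton paths in the complete graph $K_m$ such that the union of any two of them contains $G$ as a subgraph. $K_{2,3}$ is the complete bipartite graph with parts of sizes 2 and 3. *)

theory Defs
  imports Complex_Main
begin

definition path_edges :: "nat list \<Rightarrow> nat set set" where
  "path_edges p = {{p ! i, p ! Suc i} | i. Suc i < length p}"

text \<open>Hamilton paths of the complete graph K_m on vertex set {0..<m}, viewed as
  subgraphs (edge sets), so a path and its reversal are the same Hamilton path.\<close>
definition hamilton_paths :: "nat \<Rightarrow> nat set set set" where
  "hamilton_paths m = {path_edges p | p. distinct p \<and> set p = {0..<m}}"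

definition contains_subgraph :: "nat set set \<Rightarrow> 'a set \<Rightarrow> 'a set set \<Rightarrow> bool" where
  "contains_subgraph E V EG \<longleftrightarrow>
     (\<exists>f. inj_on f V \<and> (\<forall>e\<in>EG. f ` e \<in> E))"

definition H :: "nat \<Rightarrow> 'a set \<Rightarrow> 'a set set \<Rightarrow> nat" where
  "H m V EG = Max {card F | F. F \<subseteq> hamilton_paths m \<and>
      (\<forall>P\<in>F. \<forall>Q\<in>F. P \<noteq> Q \<longrightarrow> contains_subgraph (P \<union> Q) V EG)}"

definition K23_V :: "nat set" where "K23_V = {0..<5}"
definition K23_E :: "nat set set" where
  "K23_E = {{i, j} | i j. i \<in> {0,1} \<and> j \<in> {2,3,4}}"

end

theory Submission
  imports Defs "HOL-Library.Infinite_Set"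
begin

definition pat :: "bool \<Rightarrow> nat \<Rightarrow> nat list" where
  "pat b j = map (\<lambda>t. 5*j+t) (if b then [0,1,2,3,4] else [2,0,3,1,4])"

definition pth :: "nat set \<Rightarrow> nat \<Rightarrow> nat list" where
  "pth A m = concat (map (\<lambda>j. pat (j\<in>A) j) [0..<m])"

lemma set_pat: "set (pat b j) = {5*j..<5*j+5}"
proof -
  have "{5*j..<5*j+5} = {5*j, 5*j+1, 5*j+2, 5*j+3, 5*j+4}" by auto
  then show ?thesis by (cases b) (auto simp: pat_def)
qed

lemma distinct_pat: "distinct (pat b j)"
  by (cases b) (auto simp: pat_def)

lemma pth_props: "distinct (pth A m) \<and> set (pth A m) = {0..<5*m}"
proof (induction m)
  case 0
  then show ?case by (simp add: pth_def)
next
  case (Suc m)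
  have e: "pth A (Suc m) = pth A m @ pat (m\<in>A) m" by (simp add: pth_def)
  show ?case unfolding e using Suc distinct_pat[of "m\<in>A" m] set_pat[of "m\<in>A" m]
    by auto
qed

lemma edge_in: "Suc i < length p \<Longrightarrow> {p!i, p!Suc i} \<in> path_edges p"
  unfolding path_edges_def by blast

lemma pe_app1: "path_edges xs \<subseteq> path_edges (xs @ ys)"
proof
  fix e assume "e \<in> path_edges xs"
  then obtain i where "e = {xs!i, xs!Suc i}" "Suc i < length xs" unfolding path_edges_def by blast
  then show "e \<in> path_edges (xs @ ys)"
    using edge_in[of i "xs@ys"] by (simp add: nth_append)
qed

lemma pe_app2: "path_edges ys \<subseteq> path_edges (xs @ ys)"
proof
  fix e assume "e \<in> path_edges ys"
  then obtain i where "e = {ys!i, ys!Suc i}" "Suc i < length ys" unfolding path_edges_def by blast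
  then show "e \<in> path_edges (xs @ ys)"
    using edge_in[of "length xs + i" "xs@ys"] by (simp add: nth_append)
qed

lemma pe_concat: "xs \<in> set L \<Longrightarrow> path_edges xs \<subseteq> path_edges (concat L)"
proof (induction L)
  case Nil then show ?case by simp
next
  case (Cons a L)
  then show ?case using pe_app1[of a "concat L"] pe_app2[of "concat L" a] by auto
qed

lemma finite_pe: "finite (path_edges p)"
proof -
  have "path_edges p = (\<lambda>i. {p!i, p!Suc i}) ` {i. Suc i < length p}"
    unfolding path_edges_def by auto
  moreover have "finite {i. Suc i < length p}" by (rule finite_subset[of _ "{..<length p}"]) auto
  ultimately show ?thesis by simp
qed

lemma deg_le2:
  assumes "distinct p"
  shows "card {e \<in> path_edges p. v \<in> e} \<le> 2"
proof (cases "v \<in> set p")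
  case False
  then have h: "{e \<in> path_edges p. v \<in> e} = {}" unfolding path_edges_def
    by (auto dest: nth_mem[of _ p] Suc_lessD)
  show ?thesis unfolding h by simp
next
  case True
  then obtain k where k: "k < length p" "p!k = v" by (meson in_set_conv_nth)
  have "{e \<in> path_edges p. v \<in> e} \<subseteq> {{p!(k-1), p!k}, {p!k, p!Suc k}}"
  proof
    fix e assume "e \<in> {e \<in> path_edges p. v \<in> e}"
    then obtain i where i: "e = {p!i, p!Suc i}" "Suc i < length p" "v \<in> e"
      unfolding path_edges_def by blast
    then have "v = p!i \<or> v = p!Suc i" by auto
    then have "i = k \<or> Suc i = k" using k i assms nth_eq_iff_index_eq
      by (metis Suc_lessD)
    then show "e \<in> {{p!(k-1), p!k}, {p!k, p!Suc k}}" using i by auto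
  qed
  then have "card {e \<in> path_edges p. v \<in> e} \<le> card {{p!(k-1), p!k}, {p!k, p!Suc k}}"
    by (rule card_mono[rotated]) simp
  also have "\<dots> \<le> 2" by (simp add: card_insert_if)
  finally show ?thesis .
qed

lemma not_contains_self:
  assumes "distinct p"
  shows "\<not> contains_subgraph (path_edges p \<union> path_edges p) K23_V K23_E"
proof
  assume "contains_subgraph (path_edges p \<union> path_edges p) K23_V K23_E"
  then obtain f where f: "inj_on f {0..<5}" "\<forall>e\<in>K23_E. f ` e \<in> path_edges p"
    unfolding contains_subgraph_def K23_V_def by auto
  have E: "{0,2} \<in> K23_E" "{0,3} \<in> K23_E" "{0,4} \<in> K23_E"
    unfolding K23_E_def by blast+
  have d: "f 0 \<noteq> f 2" "f 0 \<noteq> f 3" "f 0 \<noteq> f 4" "f 2 \<noteq> f 3" "f 2 \<noteq> f 4" "f 3 \<noteq> f 4"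
    using f(1) unfolding inj_on_def by (auto dest!: bspec)
  have "{{f 0, f 2}, {f 0, f 3}, {f 0, f 4}} \<subseteq> {e \<in> path_edges p. f 0 \<in> e}"
    using f(2) E by auto
  then have "card {{f 0, f 2}, {f 0, f 3}, {f 0, f 4}} \<le> card {e \<in> path_edges p. f 0 \<in> e}"
    by (rule card_mono[rotated]) (simp add: finite_pe)
  moreover have "card {{f 0, f 2}, {f 0, f 3}, {f 0, f 4}} = 3"
    using d by (auto simp: doubleton_eq_iff)
  ultimately show False using deg_le2[OF assms, of "f 0"] by simp
qed

lemma contains_mono: "E \<subseteq> E' \<Longrightarrow> contains_subgraph E V G \<Longrightarrow> contains_subgraph E' V G"
  unfolding contains_subgraph_def by blast

lemma block_union: "contains_subgraph (path_edges (pat True j) \<union> path_edges (pat False j)) K23_V K23_E"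
proof -
  define g :: "nat \<Rightarrow> nat" where "g v = 5*j + [1,3,0,2,4]!v" for v
  have g: "g 0 = 5*j+1" "g 1 = 5*j+3" "g 2 = 5*j" "g 3 = 5*j+2" "g 4 = 5*j+4"
    by (simp_all add: g_def)
  have V: "K23_V = {0,1,2,3,4}" unfolding K23_V_def by auto
  have inj: "inj_on g K23_V" unfolding V inj_on_def using g by auto
  have T0: "{5*j, 5*j+1} \<in> path_edges (pat True j)" using edge_in[of 0 "pat True j"] by (simp add: pat_def)
  have T1: "{5*j+1, 5*j+2} \<in> path_edges (pat True j)" using edge_in[of 1 "pat True j"] by (simp add: pat_def)
  have T2: "{5*j+2, 5*j+3} \<in> path_edges (pat True j)" using edge_in[of 2 "pat True j"] by (simp add: pat_def)
  have T3: "{5*j+3, 5*j+4} \<in> path_edges (pat True j)" using edge_in[of 3 "pat True j"] by (simp add: pat_def)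
  have F1: "{5*j, 5*j+3} \<in> path_edges (pat False j)" using edge_in[of 1 "pat False j"] by (simp add: pat_def)
  have F3: "{5*j+1, 5*j+4} \<in> path_edges (pat False j)" using edge_in[of 3 "pat False j"] by (simp add: pat_def)
  have "\<forall>e\<in>K23_E. g ` e \<in> path_edges (pat True j) \<union> path_edges (pat False j)"
  proof
    fix e assume "e \<in> K23_E"
    then obtain a b where e: "e = {a,b}" "a \<in> {0,1}" "b \<in> {2,3,4}" unfolding K23_E_def by blast
    then show "g ` e \<in> path_edges (pat True j) \<union> path_edges (pat False j)"
      using g T0 T1 T2 T3 F1 F3 by (auto simp: insert_commute)
  qed
  then show ?thesis unfolding contains_subgraph_def using inj by blast
qed

lemma key:
  assumes "A \<subseteq> {0..<m}" "B \<subseteq> {0..<m}" "A \<noteq> B"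
  shows "contains_subgraph (path_edges (pth A m) \<union> path_edges (pth B m)) K23_V K23_E"
proof -
  obtain j where j2: "(j \<in> A) \<noteq> (j \<in> B)" using assms(3) by blast
  then have j: "j < m" "(j \<in> A) \<noteq> (j \<in> B)" using assms(1,2) by auto
  have "(\<lambda>x. pat (x\<in>A) x) j \<in> (\<lambda>x. pat (x\<in>A) x) ` {0..<m}"
    by (rule imageI) (simp add: j(1))
  then have "pat (j\<in>A) j \<in> set (map (\<lambda>j. pat (j\<in>A) j) [0..<m])" by simp
  then have a: "path_edges (pat (j\<in>A) j) \<subseteq> path_edges (pth A m)"
    unfolding pth_def by (rule pe_concat)
  have "(\<lambda>x. pat (x\<in>B) x) j \<in> (\<lambda>x. pat (x\<in>B) x) ` {0..<m}"
    by (rule imageI) (simp add: j(1))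
  then have "pat (j\<in>B) j \<in> set (map (\<lambda>j. pat (j\<in>B) j) [0..<m])" by simp
  then have b: "path_edges (pat (j\<in>B) j) \<subseteq> path_edges (pth B m)"
    unfolding pth_def by (rule pe_concat)
  have "path_edges (pat True j) \<union> path_edges (pat False j) \<subseteq> path_edges (pth A m) \<union> path_edges (pth B m)"
    using a b j(2) by (cases "j \<in> A") auto
  then show ?thesis using block_union contains_mono by blast
qed

lemma H_lower: "real (H (5*m) K23_V K23_E) \<ge> 2 ^ m"
proof -
  define F where "F = (\<lambda>A. path_edges (pth A m)) ` Pow {0..<m}"
  define X where "X = {card F | F. F \<subseteq> hamilton_paths (5*m) \<and>
      (\<forall>P\<in>F. \<forall>Q\<in>F. P \<noteq> Q \<longrightarrow> contains_subgraph (P \<union> Q) K23_V K23_E)}"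
  have inj: "inj_on (\<lambda>A. path_edges (pth A m)) (Pow {0..<m})"
  proof (rule inj_onI, rule ccontr)
    fix A B assume AB: "A \<in> Pow {0..<m}" "B \<in> Pow {0..<m}"
      "path_edges (pth A m) = path_edges (pth B m)" "A \<noteq> B"
    then have "contains_subgraph (path_edges (pth A m) \<union> path_edges (pth A m)) K23_V K23_E"
      using key[of A m B] by auto
    then show False using not_contains_self pth_props by blast
  qed
  have cardF: "card F = 2 ^ m" unfolding F_def
    by (simp add: card_image[OF inj] card_Pow)
  have sub: "F \<subseteq> hamilton_paths (5*m)"
    unfolding F_def hamilton_paths_def using pth_props by blast
  have pw: "\<forall>P\<in>F. \<forall>Q\<in>F. P \<noteq> Q \<longrightarrow> contains_subgraph (P \<union> Q) K23_V K23_E"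
    unfolding F_def using key by blast
  have inX: "card F \<in> X" unfolding X_def using sub pw by blast
  have hp: "hamilton_paths (5*m) \<subseteq> Pow (Pow {0..<5*m})"
    unfolding hamilton_paths_def path_edges_def by (auto dest: nth_mem Suc_lessD)
  have "finite (hamilton_paths (5*m))" by (rule finite_subset[OF hp]) simp
  then have "X \<subseteq> card ` Pow (hamilton_paths (5*m))" "finite (card ` Pow (hamilton_paths (5*m)))"
    unfolding X_def by auto
  then have "finite X" by (rule finite_subset)
  then have "card F \<le> Max X" using inX by simp
  then have "2 ^ m \<le> H (5*m) K23_V K23_E" unfolding H_def X_def[symmetric] cardF .
  then show ?thesis by (metis of_nat_le_iff of_nat_numeral of_nat_power)
qed

lemma phi_bound: "((1 + sqrt 5) / 2) ^ 5 \<le> (16::real)"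
proof -
  have "sqrt 5 \<le> sqrt ((12/5)^2)" by (rule real_sqrt_le_mono) (simp add: power2_eq_square)
  then have s: "sqrt 5 \<le> 12/5" by simp
  have "((1 + sqrt 5) / 2) ^ 5 \<le> (17/10::real) ^ 5"
    by (rule power_mono) (use s in auto)
  also have "\<dots> \<le> 16" by (simp add: eval_nat_numeral)
  finally show ?thesis .
qed

theorem mainTheorem4:
  shows "\<exists>S :: nat set. infinite S \<and> (\<forall>n\<in>S. n > 0) \<and>
    (\<exists>f :: nat \<Rightarrow> real.
       (\<forall>\<epsilon>>0. \<exists>N. \<forall>n\<in>S. n \<ge> N \<longrightarrow> \<bar>f n\<bar> \<le> \<epsilon> * real n) \<and>
       (\<forall>n\<in>S. real (H (4 * n) K23_V K23_E) \<ge> ((1 + sqrt 5) / 2) powr (real n - f n)))"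
proof (intro exI conjI)
  let ?S = "{n::nat. \<exists>k>0. n = 5*k}"
  show "infinite ?S" unfolding infinite_nat_iff_unbounded
  proof
    fix m show "\<exists>n>m. n \<in> ?S" by (intro exI[of _ "5*(m+1)"]) auto
  qed
  show "\<forall>n\<in>?S. n > 0" by auto
  show "\<forall>\<epsilon>>0. \<exists>N. \<forall>n\<in>?S. n \<ge> N \<longrightarrow> \<bar>(\<lambda>_. 0::real) n\<bar> \<le> \<epsilon> * real n" by auto
  show "\<forall>n\<in>?S. real (H (4 * n) K23_V K23_E) \<ge> ((1 + sqrt 5) / 2) powr (real n - (\<lambda>_. 0) n)"
  proof
    fix n assume "n \<in> ?S"
    then obtain k where n: "n = 5*k" by auto
    let ?p = "(1 + sqrt 5) / 2 :: real"
    have pos: "?p > 0" by (simp add: add_pos_nonneg)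
    have "?p powr (real n - 0) = ?p ^ (5*k)" unfolding n
      using powr_realpow[OF pos, of "5*k"] by simp
    also have "\<dots> = (?p ^ 5) ^ k" by (simp add: power_mult)
    also have "\<dots> \<le> 16 ^ k" by (rule power_mono[OF phi_bound]) (use pos in simp)
    also have "\<dots> = 2 ^ (4*k)" by (simp add: power_mult)
    also have "\<dots> \<le> real (H (5*(4*k)) K23_V K23_E)" by (rule H_lower)
    also have "5*(4*k) = 4*n" unfolding n by simp
    finally show "real (H (4 * n) K23_V K23_E) \<ge> ?p powr (real n - (\<lambda>_. 0) n)" by simp
  qed
qed

end
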